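(* Assume in addition $1\le M\le N/2$. For every $y$ such that either ($Py\equiv0\pmod N$ and $y\ne0$) or ($Py\not\equiv0\pmod N$ and $MPy\not\equiv0\pmod N$), one has $$\frac{N}{4M}\cdot\frac{N}{N-M}\;\ge\;\frac{\Pr_{\mathrm{Amp}}(y)}{\Pr_{\mathrm{QFT}}(y)}\;\ge\;\frac{N}{4M}\cdot\frac{N}{N-M}\Big(1-\frac{2M}{N}\Big)^2,\qquad \frac{N}{2M}\cdot\frac{N}{N-M}\;\ge\;\frac{\Pr_{\mathrm{Amp}}(y)}{\Pr_{\mathrm{QHS}}(y)}\;\ge\;\frac{N}{2M}\cdot\frac{N}{N-M}\Big(1-\frac{2M}{N}\Big)^2,$$ and in fact $\Pr_{\mathrm{Amp}}(y)/\Pr_{\mathrm{QFT}}(y)=\frac{N^2}{4M^2}\tan^2\theta\sin^2(2k\theta)$ and $\Pr_{\mathrm{Amp}}(y)/\Pr_{\mathrm{QHS}}(y)=\frac{N^2}{2M^2}\tan^2\theta\sin^2(2k\theta)$. Consequently, for any nonempty set $S$ of such $y$, the same two chains of inequalities hold with $\Pr(y)$ replaced by $\Pr(S)=\sum_{y\in S}\Pr(y)$ for each algorithm.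
   Context: Setting: $N\ge 2$, $\mathcal L=\{0,\dots,N-1\}$, integers $s\ge0,P\ge1,M\ge1$ with $M<N$ and $s+(M-1)P\le N-1$; $A=\{s+rP:r=0,\dots,M-1\}$; $\omega=e^{-2\pi i/N}$; $f=\mathbf 1_A$. Let $\sin\theta=\sqrt{M/N}$, $\theta\in(0,\pi/2)$, $k=\lfloor\pi/(4\theta)\rfloor$, $a_k=\frac{\sin((2k+1)\theta)}{\sqrt M}$, $b_k=\frac{\cos((2k+1)\theta)}{\sqrt{N-M}}$. Define $\Pr_{\mathrm{Amp}}(y)=\big|\frac1{\sqrt N}\sum_z\psi_k(z)\omega^{zy}\big|^2$ where $\psi_k=a_k$ on $A$ and $b_k$ off $A$; $\Pr_{\mathrm{QFT}}(y)=\big|\frac1N\sum_z(-1)^{f(z)}\omega^{zy}\big|^2$; $\Pr_{\mathrm{QHS}}(y)=\frac1{N^2}\big|\sum_{x\in A}\omega^{xy}\big|^2+\frac1{N^2}\big|\sum_{x\notin A}\omega^{xy}\big|^2$. *)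

theory Defs
  imports Complex_Main
begin

definition omega :: "nat \<Rightarrow> complex" where
  "omega N = cis (- 2 * pi / real N)"

definition setA :: "nat \<Rightarrow> nat \<Rightarrow> nat \<Rightarrow> nat set" where
  "setA s P M = {s + r * P | r. r < M}"

definition gtheta :: "nat \<Rightarrow> nat \<Rightarrow> real" where
  "gtheta N M = arcsin (sqrt (real M / real N))"

definition gk :: "nat \<Rightarrow> nat \<Rightarrow> nat" where
  "gk N M = nat \<lfloor>pi / (4 * gtheta N M)\<rfloor>"

definition ak :: "nat \<Rightarrow> nat \<Rightarrow> real" where
  "ak N M = sin ((2 * real (gk N M) + 1) * gtheta N M) / sqrt (real M)"

definition bk :: "nat \<Rightarrow> nat \<Rightarrow> real" where
  "bk N M = cos ((2 * real (gk N M) + 1) * gtheta N M) / sqrt (real N - real M)"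

definition psik :: "nat \<Rightarrow> nat \<Rightarrow> nat \<Rightarrow> nat \<Rightarrow> nat \<Rightarrow> real" where
  "psik N s P M z = (if z \<in> setA s P M then ak N M else bk N M)"

definition PrAmp :: "nat \<Rightarrow> nat \<Rightarrow> nat \<Rightarrow> nat \<Rightarrow> nat \<Rightarrow> real" where
  "PrAmp N s P M y =
     (cmod (complex_of_real (1 / sqrt (real N)) *
        (\<Sum>z<N. complex_of_real (psik N s P M z) * omega N ^ (z * y))))\<^sup>2"

definition PrQFT :: "nat \<Rightarrow> nat \<Rightarrow> nat \<Rightarrow> nat \<Rightarrow> nat \<Rightarrow> real" where
  "PrQFT N s P M y =
     (cmod (complex_of_real (1 / real N) *
        (\<Sum>z<N. (if z \<in> setA s P M then -1 else 1) * omega N ^ (z * y))))\<^sup>2"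

definition PrQHS :: "nat \<Rightarrow> nat \<Rightarrow> nat \<Rightarrow> nat \<Rightarrow> nat \<Rightarrow> real" where
  "PrQHS N s P M y =
     1 / (real N)\<^sup>2 * (cmod (\<Sum>x\<in>setA s P M. omega N ^ (x * y)))\<^sup>2 +
     1 / (real N)\<^sup>2 * (cmod (\<Sum>x\<in>{..<N} - setA s P M. omega N ^ (x * y)))\<^sup>2"

definition goodY :: "nat \<Rightarrow> nat \<Rightarrow> nat \<Rightarrow> nat \<Rightarrow> bool" where
  "goodY N P M y \<longleftrightarrow>
     ((P * y) mod N = 0 \<and> y \<noteq> 0) \<or> ((P * y) mod N \<noteq> 0 \<and> (M * P * y) mod N \<noteq> 0)"

end

theory Submission
  imports Defs
begin


lemma trig_part:
  fixes N M :: nat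
  assumes M1: "M \<ge> 1" and MN: "2 * M \<le> N"
  defines "R \<equiv> real N * (ak N M - bk N M)^2 / 4"
  shows "R = (real N)\<^sup>2 / (4 * (real M)\<^sup>2) * (tan (gtheta N M))\<^sup>2 * (sin (2 * real (gk N M) * gtheta N M))\<^sup>2"
    and "R \<le> real N / (4 * real M) * (real N / (real N - real M))"
    and "R \<ge> real N / (4 * real M) * (real N / (real N - real M)) * (1 - 2 * real M / real N)\<^sup>2"
proof -
  define t where "t = gtheta N M"
  define k where "k = gk N M"
  define x where "x = sqrt (real M / real N)"
  have Npos: "real N > 0" using assms by simp
  have MNr: "2 * real M \<le> real N" using MN by linarith
  have Mpos: "real M > 0" using M1 by simp
  have x0: "x > 0" unfolding x_def using Npos Mpos by simp
  have x2: "x^2 = real M / real N" unfolding x_def using Npos Mpos by simp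
  have xle: "x \<le> sqrt 2 / 2"
  proof -
    have "real M / real N \<le> 1/2" using MNr Npos by (simp add: field_simps)
    hence "x \<le> sqrt (1/2)" unfolding x_def by simp
    also have "sqrt (1/2) = sqrt 2 / 2" by (simp add: real_sqrt_divide field_simps)
    finally show ?thesis .
  qed
  have x1: "x < 1" using xle sqrt2_less_2 by linarith
  have t_def': "t = arcsin x" unfolding t_def gtheta_def x_def ..
  have sint: "sin t = x" unfolding t_def' using x0 x1 by simp
  have cost: "cos t = sqrt (1 - x^2)" unfolding t_def' using x0 x1 by (simp add: cos_arcsin)
  have t0: "t > 0" unfolding t_def' using x0 x1 arcsin_less_mono[of 0 x] by simp
  have t4: "t \<le> pi/4"
  proof -
    have "arcsin x \<le> arcsin (sqrt 2 / 2)" using xle x0 x1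
      by (subst arcsin_le_mono) (use sqrt2_less_2 in \<open>auto simp: real_sqrt_divide\<close>)
    also have "arcsin (sqrt 2 / 2) = pi/4" using arcsin_sin[of "pi/4"] unfolding sin_45 by simp
    finally show ?thesis unfolding t_def' .
  qed
  define c where "c = cos t"
  have xx: "x^2 < 1" using x0 x1 by (simp add: abs_square_less_1)
  have c2: "c^2 = (real N - real M)/ real N" 
  proof -
    have "(sqrt (1 - x^2))^2 = 1 - x^2" using xx by simp
    thus ?thesis unfolding c_def cost x2 using Npos by (simp add: field_simps)
  qed
  have c0: "c > 0" unfolding c_def cost using x1 x0 by (simp add: abs_square_less_1)
  have sqM: "sqrt (real M) = sqrt (real N) * x" unfolding x_def using Npos
    by (simp add: real_sqrt_divide)
  have sqNM: "sqrt (real N - real M) = sqrt (real N) * c"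
  proof -
    have "c = sqrt ((real N - real M)/ real N)" using c2 c0 by (metis real_sqrt_unique less_imp_le)
    thus ?thesis using Npos by (simp add: real_sqrt_divide)
  qed
  have sN: "sqrt (real N) > 0" using Npos by simp
  have "ak N M - bk N M = (sin ((2*real k + 1)*t) * c - cos ((2*real k + 1)*t) * x) / (sqrt (real N) * x * c)"
    unfolding ak_def bk_def sqM sqNM k_def[symmetric] t_def[symmetric] using sN x0 c0
    by (simp add: field_simps)
  also have "sin ((2*real k + 1)*t) * c - cos ((2*real k + 1)*t) * x = sin (2 * real k * t)"
    using sin_diff[of "(2*real k + 1)*t" t] unfolding c_def sint[symmetric] by (simp add: algebra_simps)
  finally have ab: "ak N M - bk N M = sin (2 * real k * t) / (sqrt (real N) * x * c)" .
  have Rv: "R = sin (2 * real k * t)^2 / (4 * x^2 * c^2)"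
    unfolding R_def ab using sN x0 c0 Npos by (simp add: power_divide power_mult_distrib field_simps)
  show "R = (real N)\<^sup>2 / (4 * (real M)\<^sup>2) * (tan (gtheta N M))\<^sup>2 * (sin (2 * real (gk N M) * gtheta N M))\<^sup>2"
  proof -
    have tt: "tan t = x / c" unfolding tan_def c_def sint ..
    have Mx: "real M = real N * x^2" using x2 Npos by simp
    show ?thesis unfolding Rv t_def[symmetric] k_def[symmetric] tt Mx using Npos x0 c0
      by (simp add: power_divide field_simps power2_eq_square)
  qed
  have bnd: "real N / (4 * real M) * (real N / (real N - real M)) = 1 / (4 * x^2 * c^2)"
    unfolding x2 c2 using Npos Mpos MNr by (simp add: field_simps)
  have s1: "sin (2 * real k * t)^2 \<le> 1" by (simp add: abs_square_le_1)
  show "R \<le> real N / (4 * real M) * (real N / (real N - real M))"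
    unfolding bnd Rv using x0 c0 s1 by (simp add: divide_right_mono)
  have kf: "real k \<le> pi / (4*t) \<and> real k > pi/(4*t) - 1"
  proof -
    have "pi/(4*t) \<ge> 1" using t4 t0 by (simp add: field_simps)
    hence "\<lfloor>pi/(4*t)\<rfloor> \<ge> 0" by simp
    hence "real k = \<lfloor>pi/(4*t)\<rfloor>" unfolding k_def gk_def t_def[symmetric] by simp
    thus ?thesis by linarith
  qed
  have kt1: "2 * real k * t \<le> pi/2"
  proof -
    have "real k * (4*t) \<le> pi" using kf t0 by (simp add: field_simps)
    thus ?thesis by simp
  qed
  have kt2: "2 * real k * t \<ge> pi/2 - 2*t"
  proof -
    have "(real k + 1) * (4*t) > pi" using kf t0 by (simp add: field_simps)
    thus ?thesis by (simp add: algebra_simps)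
  qed
  have "sin (pi/2 - 2*t) \<le> sin (2 * real k * t)"
    using kt1 kt2 t4 by (intro sin_monotone_2pi_le) auto
  moreover have "sin (pi/2 - 2*t) = cos (2*t)" by (simp add: sin_cos_eq)
  moreover have "cos (2*t) = 1 - 2 * x^2" using cos_double_sin[of t] sint by simp
  moreover have "cos (2*t) \<ge> 0" using t0 t4 by (intro cos_ge_zero) auto
  ultimately have "(1 - 2 * x^2)^2 \<le> sin (2 * real k * t)^2"
    by (metis power_mono)
  moreover have "1 - 2 * real M / real N = 1 - 2 * x^2" using x2 by simp
  moreover have "(1 - 2 * x^2)^2 / (4 * x^2 * c^2) \<le> sin (2 * real k * t)^2 / (4 * x^2 * c^2)"
    using calculation x0 c0 by (intro divide_right_mono) auto
  ultimately show "R \<ge> real N / (4 * real M) * (real N / (real N - real M)) * (1 - 2 * real M / real N)\<^sup>2"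
    unfolding bnd Rv by simp
qed



lemma omega_pow: "omega N ^ n = cis (- 2 * pi * real n / real N)"
  unfolding omega_def DeMoivre by (simp add: field_simps)

lemma omega_eq1:
  assumes "N > 0" shows "omega N ^ n = 1 \<longleftrightarrow> n mod N = 0"
proof
  assume "n mod N = 0"
  then obtain q where q: "n = N * q" by auto
  have "omega N ^ N = 1" unfolding omega_pow using assms
    by (simp add: cis_multiple_2pi[of "-1", simplified])
  thus "omega N ^ n = 1" unfolding q power_mult by simp
next
  assume "omega N ^ n = 1"
  hence "cos (- 2 * pi * real n / real N) = 1" unfolding omega_pow by (simp add: complex_eq_iff)
  hence "\<exists>j::int. - 2 * pi * real n / real N = real_of_int j * 2 * pi"
    using cos_one_2pi_int by blast
  then obtain j :: int where j: "- 2 * pi * real n / real N = real_of_int j * 2 * pi"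
    by blast
  hence "pi * real n = pi * (- real_of_int j * real N)" using assms by (simp add: field_simps)
  hence "real n = - real_of_int j * real N" using mult_left_cancel[OF pi_neq_zero] by blast
  hence "int n = - j * int N" by (metis of_int_eq_iff of_int_minus of_int_mult of_int_of_nat_eq)
  hence "int N dvd int n" by simp
  thus "n mod N = 0" by simp
qed

lemma sumF:
  assumes "0 < y" "y < N"
  shows "(\<Sum>z<N. omega N ^ (z * y)) = 0"
proof -
  have ne: "omega N ^ y \<noteq> 1" using assms omega_eq1[of N y] by simp
  have "(\<Sum>z<N. omega N ^ (z * y)) = (\<Sum>z<N. (omega N ^ y) ^ z)"
    by (rule sum.cong[OF refl]) (metis mult.commute power_mult)
  also have "\<dots> = ((omega N ^ y) ^ N - 1) / (omega N ^ y - 1)"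
    using ne by (rule geometric_sum)
  also have "(omega N ^ y) ^ N = 1"
    using omega_eq1[of N "y * N"] assms by (simp add: power_mult)
  finally show ?thesis by simp
qed

lemma setA_sub:
  assumes "M \<ge> 1" "s + (M - 1) * P \<le> N - 1" "N \<ge> 2"
  shows "setA s P M \<subseteq> {..<N}"
proof
  fix z assume "z \<in> setA s P M"
  then obtain r where r: "z = s + r * P" "r < M" unfolding setA_def by auto
  hence "r \<le> M - 1" by simp
  hence "z \<le> s + (M - 1) * P" using r by (simp add: mult_le_mono1)
  thus "z \<in> {..<N}" using assms by simp
qed

lemma sumG:
  assumes "P \<ge> 1"
  shows "(\<Sum>x\<in>setA s P M. omega N ^ (x * y)) = omega N ^ (s * y) * (\<Sum>r<M. (omega N ^ (P * y)) ^ r)"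
proof -
  have A: "setA s P M = (\<lambda>r. s + r * P) ` {..<M}" unfolding setA_def by auto
  have inj: "inj_on (\<lambda>r. s + r * P) {..<M}" using assms by (auto simp: inj_on_def)
  show ?thesis unfolding A sum.reindex[OF inj]
    by (simp add: sum_distrib_left algebra_simps power_add power_mult[symmetric])
qed

lemma sumG_ne:
  assumes "P \<ge> 1" "M \<ge> 1" "N \<ge> 2" "y < N" "goodY N P M y"
  shows "(\<Sum>x\<in>setA s P M. omega N ^ (x * y)) \<noteq> 0"
proof -
  have w0: "omega N \<noteq> 0" unfolding omega_def by (metis cis_neq_zero)
  have "(\<Sum>r<M. (omega N ^ (P * y)) ^ r) \<noteq> 0"
  proof (cases "(P * y) mod N = 0")
    case True
    hence "omega N ^ (P * y) = 1" using omega_eq1[of N] assms by simp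
    thus ?thesis using assms by simp
  next
    case False
    hence ne: "omega N ^ (P * y) \<noteq> 1" using omega_eq1[of N] assms by simp
    have "(M * P * y) mod N \<noteq> 0" using False assms unfolding goodY_def by auto
    hence "(omega N ^ (P * y)) ^ M \<noteq> 1" using omega_eq1[of N "M * P * y"] assms
      by (simp add: power_mult[symmetric] mult.commute mult.left_commute)
    thus ?thesis unfolding geometric_sum[OF ne] using ne by simp
  qed
  thus ?thesis unfolding sumG[OF assms(1)] using w0 by simp
qed



lemma restrictA:
  fixes N :: nat
  assumes "A \<subseteq> {..<N}"
  shows "(\<Sum>z<N. if z \<in> A then f z else 0) = (\<Sum>z\<in>A. f z)"
proof -
  have "(\<Sum>z<N. if z \<in> A then f z else 0) = sum f ({..<N} \<inter> A)"
    using sum.inter_restrict[of "{..<N}" f A] by simp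
  also have "{..<N} \<inter> A = A" using assms by auto
  finally show ?thesis .
qed

lemma pr_vals:
  fixes N s P M y :: nat
  assumes sub: "setA s P M \<subseteq> {..<N}" and y: "0 < y" "y < N"
  defines "G \<equiv> (\<Sum>x\<in>setA s P M. omega N ^ (x * y))"
  shows "PrAmp N s P M y = (ak N M - bk N M)^2 * (cmod G)^2 / real N"
    and "PrQFT N s P M y = 4 * (cmod G)^2 / (real N)^2"
    and "PrQHS N s P M y = 2 * (cmod G)^2 / (real N)^2"
proof -
  let ?A = "setA s P M"
  let ?w = "\<lambda>z. omega N ^ (z * y)"
  have F: "(\<Sum>z<N. ?w z) = 0" using sumF y by blast
  have "(\<Sum>z<N. complex_of_real (psik N s P M z) * ?w z)
      = (\<Sum>z<N. complex_of_real (bk N M) * ?w z + (if z \<in> ?A then complex_of_real (ak N M - bk N M) * ?w z else 0))"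
    by (rule sum.cong) (auto simp: psik_def algebra_simps)
  also have "\<dots> = complex_of_real (bk N M) * (\<Sum>z<N. ?w z) + complex_of_real (ak N M - bk N M) * G"
    unfolding sum.distrib restrictA[OF sub] G_def by (simp add: sum_distrib_left)
  finally have SA: "(\<Sum>z<N. complex_of_real (psik N s P M z) * ?w z) = complex_of_real (ak N M - bk N M) * G"
    using F by simp
  have Npos: "real N > 0" using y by simp
  show "PrAmp N s P M y = (ak N M - bk N M)^2 * (cmod G)^2 / real N"
  proof -
    have "cmod (complex_of_real (1 / sqrt (real N)) * (complex_of_real (ak N M - bk N M) * G))
        = (1 / sqrt (real N)) * (\<bar>ak N M - bk N M\<bar> * cmod G)"
      unfolding norm_mult norm_of_real using Npos by simp
    hence "PrAmp N s P M y = ((1 / sqrt (real N)) * (\<bar>ak N M - bk N M\<bar> * cmod G))^2"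
      unfolding PrAmp_def SA by simp
    also have "\<dots> = (ak N M - bk N M)^2 * (cmod G)^2 / real N"
      using Npos by (simp add: power_mult_distrib power_divide)
    finally show ?thesis .
  qed
  have "(\<Sum>z<N. (if z \<in> ?A then -1 else 1) * ?w z)
      = (\<Sum>z<N. ?w z + (if z \<in> ?A then -2 * ?w z else 0))"
    by (rule sum.cong) auto
  also have "\<dots> = -2 * G" unfolding sum.distrib restrictA[OF sub] G_def F
    by (simp add: sum_distrib_left)
  finally have SQ: "(\<Sum>z<N. (if z \<in> ?A then -1 else 1) * ?w z) = -2 * G" .
  show "PrQFT N s P M y = 4 * (cmod G)^2 / (real N)^2"
  proof -
    have "cmod (complex_of_real (1 / real N) * (-2 * G)) = (1 / real N) * (2 * cmod G)"
      unfolding norm_mult norm_of_real using Npos by simp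
    hence "PrQFT N s P M y = ((1 / real N) * (2 * cmod G))^2"
      unfolding PrQFT_def SQ by simp
    also have "\<dots> = 4 * (cmod G)^2 / (real N)^2"
      using Npos by (simp add: power_mult_distrib power_divide)
    finally show ?thesis .
  qed
  have "(\<Sum>x\<in>{..<N} - ?A. ?w x) = (\<Sum>z<N. ?w z) - G"
    unfolding G_def using sub by (simp add: sum_diff)
  hence SH: "(\<Sum>x\<in>{..<N} - ?A. ?w x) = - G" using F by simp
  show "PrQHS N s P M y = 2 * (cmod G)^2 / (real N)^2"
    unfolding PrQHS_def SH G_def[symmetric] by simp
qed

theorem mainTheorem4:
  fixes N s P M :: nat
  assumes "N \<ge> 2" and "P \<ge> 1" and "M \<ge> 1" and "M < N"
    and "s + (M - 1) * P \<le> N - 1"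
    and "2 * M \<le> N"
  shows
   "(\<forall>y<N. goodY N P M y \<longrightarrow>
       real N / (4 * real M) * (real N / (real N - real M))
          \<ge> PrAmp N s P M y / PrQFT N s P M y \<and>
       PrAmp N s P M y / PrQFT N s P M y
          \<ge> real N / (4 * real M) * (real N / (real N - real M)) * (1 - 2 * real M / real N)\<^sup>2 \<and>
       real N / (2 * real M) * (real N / (real N - real M))
          \<ge> PrAmp N s P M y / PrQHS N s P M y \<and>
       PrAmp N s P M y / PrQHS N s P M y
          \<ge> real N / (2 * real M) * (real N / (real N - real M)) * (1 - 2 * real M / real N)\<^sup>2 \<and>
       PrAmp N s P M y / PrQFT N s P M y
          = (real N)\<^sup>2 / (4 * (real M)\<^sup>2) * (tan (gtheta N M))\<^sup>2
              * (sin (2 * real (gk N M) * gtheta N M))\<^sup>2 \<and>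
       PrAmp N s P M y / PrQHS N s P M y
          = (real N)\<^sup>2 / (2 * (real M)\<^sup>2) * (tan (gtheta N M))\<^sup>2
              * (sin (2 * real (gk N M) * gtheta N M))\<^sup>2)
    \<and>
    (\<forall>S. S \<noteq> {} \<and> S \<subseteq> {y. y < N \<and> goodY N P M y} \<longrightarrow>
       real N / (4 * real M) * (real N / (real N - real M))
          \<ge> (\<Sum>y\<in>S. PrAmp N s P M y) / (\<Sum>y\<in>S. PrQFT N s P M y) \<and>
       (\<Sum>y\<in>S. PrAmp N s P M y) / (\<Sum>y\<in>S. PrQFT N s P M y)
          \<ge> real N / (4 * real M) * (real N / (real N - real M)) * (1 - 2 * real M / real N)\<^sup>2 \<and>
       real N / (2 * real M) * (real N / (real N - real M))
          \<ge> (\<Sum>y\<in>S. PrAmp N s P M y) / (\<Sum>y\<in>S. PrQHS N s P M y) \<and>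
       (\<Sum>y\<in>S. PrAmp N s P M y) / (\<Sum>y\<in>S. PrQHS N s P M y)
          \<ge> real N / (2 * real M) * (real N / (real N - real M)) * (1 - 2 * real M / real N)\<^sup>2)"
proof -
  define R where "R = real N * (ak N M - bk N M)^2 / 4"
  have sub: "setA s P M \<subseteq> {..<N}" using setA_sub assms by blast
  have T1: "R = (real N)\<^sup>2 / (4 * (real M)\<^sup>2) * (tan (gtheta N M))\<^sup>2 * (sin (2 * real (gk N M) * gtheta N M))\<^sup>2"
   and T2: "R \<le> real N / (4 * real M) * (real N / (real N - real M))"
   and T3: "R \<ge> real N / (4 * real M) * (real N / (real N - real M)) * (1 - 2 * real M / real N)\<^sup>2"
    using trig_part[of M N] assms unfolding R_def by auto
  have Npos: "real N > 0" using assms by simp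
  have key: "PrQFT N s P M y > 0 \<and> PrAmp N s P M y = R * PrQFT N s P M y
     \<and> PrQHS N s P M y = PrQFT N s P M y / 2" if y: "y < N" "goodY N P M y" for y
  proof -
    have y0: "0 < y" using y unfolding goodY_def by (cases "y = 0") auto
    define G where "G = (\<Sum>x\<in>setA s P M. omega N ^ (x * y))"
    have "G \<noteq> 0" unfolding G_def using sumG_ne assms y by blast
    hence g: "(cmod G)^2 > 0" by simp
    note pv = pr_vals[OF sub y0 y(1), folded G_def]
    show ?thesis unfolding pv R_def using g Npos by (simp add: field_simps power2_eq_square)
  qed
  have P1: "PrAmp N s P M y / PrQFT N s P M y = R" if "y < N" "goodY N P M y" for y
    using key[OF that] by simp
  have P2: "PrAmp N s P M y / PrQHS N s P M y = 2 * R" if "y < N" "goodY N P M y" for y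
  proof -
    have k: "PrQFT N s P M y > 0" "PrAmp N s P M y = R * PrQFT N s P M y"
      "PrQHS N s P M y = PrQFT N s P M y / 2" using key[OF that] by auto
    show ?thesis unfolding k(2,3) using k(1) by (simp add: field_simps)
  qed
  have E1: "real N / (2 * real M) * (real N / (real N - real M)) = 2 * (real N / (4 * real M) * (real N / (real N - real M)))"
    by simp
  have E3: "real N / (2 * real M) * (real N / (real N - real M)) * (1 - 2 * real M / real N)\<^sup>2 = 2 * (real N / (4 * real M) * (real N / (real N - real M)) * (1 - 2 * real M / real N)\<^sup>2)"
    by simp
  have E2: "(real N)\<^sup>2 / (2 * (real M)\<^sup>2) = 2 * ((real N)\<^sup>2 / (4 * (real M)\<^sup>2))" by simp
  show ?thesis
  proof (intro conjI allI impI)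
    fix y assume y: "y < N" "goodY N P M y"
    show "real N / (4 * real M) * (real N / (real N - real M)) \<ge> PrAmp N s P M y / PrQFT N s P M y"
      using P1[OF y] T2 by simp
    show "PrAmp N s P M y / PrQFT N s P M y \<ge> real N / (4 * real M) * (real N / (real N - real M)) * (1 - 2 * real M / real N)\<^sup>2"
      using P1[OF y] T3 by simp
    show "real N / (2 * real M) * (real N / (real N - real M)) \<ge> PrAmp N s P M y / PrQHS N s P M y"
      using P2[OF y] T2 E1 by linarith
    show "PrAmp N s P M y / PrQHS N s P M y \<ge> real N / (2 * real M) * (real N / (real N - real M)) * (1 - 2 * real M / real N)\<^sup>2"
      using P2[OF y] T3 E3 by linarith
    show "PrAmp N s P M y / PrQFT N s P M y = (real N)\<^sup>2 / (4 * (real M)\<^sup>2) * (tan (gtheta N M))\<^sup>2 * (sin (2 * real (gk N M) * gtheta N M))\<^sup>2"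
      using P1[OF y] T1 by simp
    show "PrAmp N s P M y / PrQHS N s P M y = (real N)\<^sup>2 / (2 * (real M)\<^sup>2) * (tan (gtheta N M))\<^sup>2 * (sin (2 * real (gk N M) * gtheta N M))\<^sup>2"
      using P2[OF y] T1 E2 by (simp only:)
  next
    fix S assume S: "S \<noteq> {} \<and> S \<subseteq> {y. y < N \<and> goodY N P M y}"
    have fin: "finite S" using S finite_subset[of S "{..<N}"] by auto
    have Q0: "(\<Sum>y\<in>S. PrQFT N s P M y) > 0"
      using S fin key by (intro sum_pos) auto
    have SA: "(\<Sum>y\<in>S. PrAmp N s P M y) = R * (\<Sum>y\<in>S. PrQFT N s P M y)"
      unfolding sum_distrib_left using S key by (intro sum.cong) auto
    have SH: "(\<Sum>y\<in>S. PrQHS N s P M y) = (\<Sum>y\<in>S. PrQFT N s P M y) / 2"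
      unfolding sum_divide_distrib using S key by (intro sum.cong) auto
    have r1: "(\<Sum>y\<in>S. PrAmp N s P M y) / (\<Sum>y\<in>S. PrQFT N s P M y) = R"
      unfolding SA using Q0 by simp
    have r2: "(\<Sum>y\<in>S. PrAmp N s P M y) / (\<Sum>y\<in>S. PrQHS N s P M y) = 2 * R"
      unfolding SA SH using Q0 by simp
    show "real N / (4 * real M) * (real N / (real N - real M)) \<ge> (\<Sum>y\<in>S. PrAmp N s P M y) / (\<Sum>y\<in>S. PrQFT N s P M y)"
      using r1 T2 by simp
    show "(\<Sum>y\<in>S. PrAmp N s P M y) / (\<Sum>y\<in>S. PrQFT N s P M y) \<ge> real N / (4 * real M) * (real N / (real N - real M)) * (1 - 2 * real M / real N)\<^sup>2"
      using r1 T3 by simp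
    show "real N / (2 * real M) * (real N / (real N - real M)) \<ge> (\<Sum>y\<in>S. PrAmp N s P M y) / (\<Sum>y\<in>S. PrQHS N s P M y)"
      using r2 T2 E1 by linarith
    show "(\<Sum>y\<in>S. PrAmp N s P M y) / (\<Sum>y\<in>S. PrQHS N s P M y) \<ge> real N / (2 * real M) * (real N / (real N - real M)) * (1 - 2 * real M / real N)\<^sup>2"
      using r2 T3 E3 by linarith
  qed
qed

end
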